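(* Let $r\ge 1$ be an integer, $\tau_0>0$, and let $k_a$ satisfy $rk_a\in(0,1)$. Let $$h_w> \frac{4\tau_0}{(1+r)(1+rk_a)}.$$ Then there exist $k_v>0$, $k_p>0$ such that for every $\tau\in[0,\tau_0]$, the polynomial $\tau s^3+s^2+\big(rk_v+\tfrac{r(r+1)}{2}k_ph_w\big)s+rk_p$ is Hurwitz and $$r\,\sup_{\omega\in\mathbb{R}}|H_0(j\omega;\tau)|\le 1,\qquad H_0(s;\tau)=\frac{k_as^2+k_vs+k_p}{\tau s^3+s^2+\big(rk_v+\tfrac{r(r+1)}{2}k_ph_w\big)s+rk_p}.$$ Consequently, for every $\tau\in[0,\tau_0]$ and every $\omega\in\mathbb{R}$, all roots $z$ of $P(z;\omega)=z^r-H_0(j\omega;\tau)\sum_{l=1}^r z^{r-l}$ satisfy $|z|\le 1$ (i.e. the platoon is robustly string stable).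
   Context: Platoon of identical vehicles with dynamics $\ddot x_i=a_i$, $\tau\dot a_i+a_i=u_i$, parasitic lag $\tau\in[0,\tau_0]$, each vehicle using position, velocity and acceleration of its $r$ immediate predecessors via the control law $u_i=\sum_{l=1}^r\big[k_a a_{i-l}-k_v(v_i-v_{i-l})-k_p(x_i-x_{i-l}+d_l+l h_w v_i)\big]$ (identical gains for all $l$), where $d_l$ is the standstill distance to the $l$-th predecessor. With spacing errors $e_i=x_i-x_{i-1}+d+h_wv_i$, the errors propagate as $E_i(s)=H_0(s)\sum_{l=1}^rE_{i-l}(s)$. Robust string stability means the spectral radius of the characteristic polynomial $P(z;\omega)$ is at most $1$ for all $\omega$ and all $\tau\in[0,\tau_0]$. *)

theory Defs
  imports "HOL-Analysis.Analysis" "HOL-Computational_Algebra.Polynomial"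
begin

definition hurwitz :: "complex poly \<Rightarrow> bool" where
  "hurwitz p \<longleftrightarrow> p \<noteq> 0 \<and> (\<forall>s. poly p s = 0 \<longrightarrow> Re s < 0)"

definition den_poly :: "nat \<Rightarrow> real \<Rightarrow> real \<Rightarrow> real \<Rightarrow> real \<Rightarrow> complex poly" where
  "den_poly r kv kp hw tau =
     [: complex_of_real (real r * kp),
        complex_of_real (real r * kv + real r * (real r + 1) / 2 * kp * hw),
        1,
        complex_of_real tau :]"

definition H0 :: "nat \<Rightarrow> real \<Rightarrow> real \<Rightarrow> real \<Rightarrow> real \<Rightarrow> real \<Rightarrow> complex \<Rightarrow> complex" where
  "H0 r ka kv kp hw tau s =
     (complex_of_real ka * s^2 + complex_of_real kv * s + complex_of_real kp)
     / poly (den_poly r kv kp hw tau) s"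

definition charP :: "nat \<Rightarrow> real \<Rightarrow> real \<Rightarrow> real \<Rightarrow> real \<Rightarrow> real \<Rightarrow> real \<Rightarrow> complex \<Rightarrow> complex" where
  "charP r ka kv kp hw tau \<omega> z =
     z ^ r - H0 r ka kv kp hw tau (\<i> * complex_of_real \<omega>) * (\<Sum>l=1..r. z ^ (r - l))"

end

theory Submission imports Defs begin
lemma hurw:
  fixes A B tau :: real
  assumes t: "tau \<ge> 0" and A: "A > 0" and B: "B > 0" and AB: "A > tau * B"
  shows "hurwitz [: complex_of_real B, complex_of_real A, 1, complex_of_real tau :]"
  unfolding hurwitz_def
proof (intro conjI allI impI)
  show "[: complex_of_real B, complex_of_real A, 1, complex_of_real tau :] \<noteq> 0" by simp
  fix s assume h: "poly [: complex_of_real B, complex_of_real A, 1, complex_of_real tau :] s = 0"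
  define x where "x = Re s"
  define y where "y = Im s"
  have sx: "s = Complex x y" by (simp add: x_def y_def)
  have R: "B + A*x + x^2 - y^2 + tau*(x^3 - 3*x*y^2) = 0"
    using arg_cong[OF h, of Re] unfolding sx by (simp add: power2_eq_square power3_eq_cube algebra_simps)
  have I: "y * (A + 2*x + tau*(3*x^2 - y^2)) = 0"
    using arg_cong[OF h, of Im] unfolding sx by (simp add: power2_eq_square power3_eq_cube algebra_simps)
  show "Re s < 0"
  proof (rule ccontr)
    assume "\<not> Re s < 0"
    hence x: "x \<ge> 0" by (simp add: x_def)
    show False
    proof (cases "y = 0")
      case True
      with R have "B + A*x + x^2 + tau*x^3 = 0" by simp
      moreover have "A*x \<ge> 0" "tau*x^3 \<ge> 0" using x A t by auto
      ultimately show False using B by (smt (verit) zero_le_power2)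
    next
      case False
      with I have I': "A + 2*x + tau*(3*x^2 - y^2) = 0" by simp
      have "tau*(B + A*x + x^2 - y^2 + tau*(x^3 - 3*x*y^2)) - (3*tau*x+1)*(A + 2*x + tau*(3*x^2 - y^2))
         = tau*B - A - (8*tau^2*x^3 + 8*tau*x^2 + 2*tau*A*x + 2*x)"
        by (simp add: algebra_simps power2_eq_square power3_eq_cube)
      hence e: "tau*B - A = 8*tau^2*x^3 + 8*tau*x^2 + 2*tau*A*x + 2*x" using R I' by simp
      have "8*tau^2*x^3 + 8*tau*x^2 + 2*tau*A*x + 2*x \<ge> 0" using x t A by simp
      thus False using e AB by linarith
    qed
  qed
qed
lemma mag:
  fixes r :: nat and ka kv kp hw tau w :: real
  defines "A \<equiv> real r * kv + real r * (real r + 1) / 2 * kp * hw"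
  assumes r: "r \<ge> 1" and t: "tau \<ge> 0"
    and c1: "2*A*tau \<le> 1 - (real r*ka)^2"
    and c2: "A^2 - (real r*kv)^2 - 2*real r*kp*(1 - real r*ka) \<ge> 0"
  shows "real r * cmod (H0 r ka kv kp hw tau (\<i> * complex_of_real w)) \<le> 1"
proof -
  define N where "N = complex_of_real ka * (\<i> * complex_of_real w)^2 + complex_of_real kv * (\<i> * complex_of_real w) + complex_of_real kp"
  define D where "D = poly (den_poly r kv kp hw tau) (\<i> * complex_of_real w)"
  have H: "H0 r ka kv kp hw tau (\<i> * complex_of_real w) = N / D"
    by (simp add: H0_def N_def D_def)
  have N2: "(cmod N)^2 = (kp - ka*w^2)^2 + (kv*w)^2"
    unfolding N_def cmod_power2 by (simp add: power2_eq_square algebra_simps)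
  have D2: "(cmod D)^2 = (real r*kp - w^2)^2 + (A*w - tau*w^3)^2"
    unfolding D_def cmod_power2 den_poly_def A_def by (simp add: power2_eq_square power3_eq_cube algebra_simps)
  define u where "u = w^2"
  have u: "u \<ge> 0" by (simp add: u_def)
  have id: "(real r*kp - w^2)^2 + (A*w - tau*w^3)^2 - (real r)^2 * ((kp - ka*w^2)^2 + (kv*w)^2)
      = u * (tau^2*u^2 + ((1 - (real r*ka)^2) - 2*A*tau)*u + (A^2 - (real r*kv)^2 - 2*real r*kp*(1 - real r*ka)))"
    unfolding u_def by (simp add: power2_eq_square power3_eq_cube algebra_simps)
  have "tau^2*u^2 + ((1 - (real r*ka)^2) - 2*A*tau)*u + (A^2 - (real r*kv)^2 - 2*real r*kp*(1 - real r*ka)) \<ge> 0"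
    using c1 c2 u by (intro add_nonneg_nonneg mult_nonneg_nonneg) auto
  hence "u * (tau^2*u^2 + ((1 - (real r*ka)^2) - 2*A*tau)*u + (A^2 - (real r*kv)^2 - 2*real r*kp*(1 - real r*ka))) \<ge> 0"
    using u by simp
  hence "(real r * cmod N)^2 \<le> (cmod D)^2" using id N2 D2 by (simp add: power_mult_distrib)
  hence le: "real r * cmod N \<le> cmod D" by (rule power2_le_imp_le) simp
  show ?thesis
  proof (cases "D = 0")
    case True thus ?thesis by (simp add: H)
  next
    case False
    hence "cmod D > 0" by simp
    thus ?thesis using le by (simp add: H norm_divide field_simps)
  qed
qed

lemma roots:
  fixes H z :: complex and r :: nat
  assumes r: "r \<ge> 1" and h: "real r * cmod H \<le> 1" and eq: "z^r - H * (\<Sum>l=1..r. z^(r-l)) = 0"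
  shows "cmod z \<le> 1"
proof (rule ccontr)
  assume "\<not> cmod z \<le> 1"
  hence z: "cmod z > 1" by simp
  have "z^r = H * (\<Sum>l=1..r. z^(r-l))" using eq by simp
  hence "cmod z ^ r = cmod (H * (\<Sum>l=1..r. z^(r-l)))" by (metis norm_power)
  also have "\<dots> \<le> cmod H * (\<Sum>l=1..r. cmod z^(r-l))"
    by (simp add: norm_mult mult_left_mono norm_sum norm_power sum_norm_le)
  finally have a: "cmod z ^ r \<le> cmod H * (\<Sum>l=1..r. cmod z^(r-l))" .
  have s: "(\<Sum>l=1..r. cmod z^(r-l)) < (\<Sum>l=1..r. cmod z^r)"
  proof (rule sum_strict_mono)
    show "finite {1..r}" by simp
    show "{1..r} \<noteq> {}" using r by simp
    fix l assume "l \<in> {1..r}"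
    thus "cmod z^(r-l) < cmod z^r" using z by (intro power_strict_increasing) auto
  qed
  have "real r * cmod z ^ r \<le> (real r * cmod H) * (\<Sum>l=1..r. cmod z^(r-l))"
    using a by (simp add: mult_left_mono mult.assoc)
  also have "\<dots> \<le> (\<Sum>l=1..r. cmod z^(r-l))"
    using h by (intro mult_left_le_one_le sum_nonneg) auto
  also have "\<dots> < real r * cmod z ^ r" using s by simp
  finally show False by simp
qed
theorem theorem2:
  fixes r :: nat and tau0 ka hw :: real
  assumes "r \<ge> 1" and "tau0 > 0"
    and "0 < real r * ka" and "real r * ka < 1"
    and "hw > 4 * tau0 / ((1 + real r) * (1 + real r * ka))"
  shows "\<exists>kv kp. kv > 0 \<and> kp > 0 \<and>
    (\<forall>tau \<in> {0..tau0}.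
       hurwitz (den_poly r kv kp hw tau) \<and>
       bdd_above (range (\<lambda>\<omega>::real. cmod (H0 r ka kv kp hw tau (\<i> * complex_of_real \<omega>)))) \<and>
       real r * (SUP \<omega>::real. cmod (H0 r ka kv kp hw tau (\<i> * complex_of_real \<omega>))) \<le> 1) \<and>
    (\<forall>tau \<in> {0..tau0}. \<forall>\<omega>::real. \<forall>z::complex.
       charP r ka kv kp hw tau \<omega> z = 0 \<longrightarrow> cmod z \<le> 1)"
proof -
  note r = assms(1) and t0 = assms(2) and k1 = assms(3) and k2 = assms(4) and hwa = assms(5)
  define R where "R = real r"
  have R: "R \<ge> 1" using r by (simp add: R_def)
  define e where "e = 1 - R*ka"
  define p where "p = 1 + R*ka"
  have e: "e > 0" and p: "p > 0" "p < 2" using k1 k2 by (auto simp: e_def p_def R_def)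
  have "4 * tau0 / ((1 + R) * p) < hw" using hwa by (simp add: R_def p_def)
  hence hw1: "4 * tau0 < hw * ((1 + R) * p)" using R p by (simp add: pos_divide_less_eq)
  have hw: "hw > 0"
  proof -
    have "0 < hw * ((1 + R) * p)" using hw1 t0 by linarith
    moreover have "(1 + R) * p > 0" using R p by simp
    ultimately show ?thesis by (simp add: zero_less_mult_iff)
  qed
  define L where "L = 2*e / (R*(R+1)*hw)"
  define U where "U = e*p / (2*R*tau0)"
  have LU: "L < U"
  proof -
    have k: "4*tau0*e < hw * ((1 + R) * p)*e" using hw1 e by (intro mult_strict_right_mono) auto
    have "L = (4*tau0*e) / (2*R*tau0*(R+1)*hw)" unfolding L_def
    proof -
      have "R*(R+1)*hw \<noteq> 0" "2*R*tau0*(R+1)*hw \<noteq> 0" using t0 R hw by auto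
      thus "2*e/(R*(R+1)*hw) = (4*tau0*e) / (2*R*tau0*(R+1)*hw)"
        by (simp add: frac_eq_eq)
    qed
    also have "\<dots> < (hw * ((1 + R) * p)*e) / (2*R*tau0*(R+1)*hw)"
      using k R t0 hw by (intro divide_strict_right_mono) auto
    also have "\<dots> = U" unfolding U_def
    proof -
      have "R*(R+1)*hw \<noteq> 0" "2*R*tau0*(R+1)*hw \<noteq> 0" "2*R*tau0 \<noteq> 0" using t0 R hw by auto
      thus "(hw * ((1 + R) * p)*e) / (2*R*tau0*(R+1)*hw) = e*p/(2*R*tau0)"
        by (simp add: frac_eq_eq)
    qed
    finally show ?thesis .
  qed
  have L0: "L > 0" unfolding L_def using e R hw by simp
  define kv where "kv = (L + U)/2"
  define kp where "kp = (U - L)/((R+1)*hw)"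
  have kv: "kv > 0" using L0 LU by (simp add: kv_def)
  have kp: "kp > 0" using LU R hw by (simp add: kp_def)
  define A where "A = R * kv + R * (R + 1) / 2 * kp * hw"
  have kph: "(R+1)*hw*kp = U - L"
  proof -
    have "(R+1)*hw \<noteq> 0" using R hw by auto
    thus ?thesis by (simp add: kp_def)
  qed
  have "A = R*kv + R/2*((R+1)*hw*kp)" by (simp add: A_def algebra_simps)
  also have "\<dots> = R*kv + R/2*(U - L)" by (simp only: kph)
  also have "\<dots> = R*U" by (simp add: kv_def field_simps)
  finally have AU: "A = R*U" .
  have A0: "A > 0" using AU R L0 LU by simp
  have c1: "2*A*tau \<le> 1 - (R*ka)^2" if "tau \<in> {0..tau0}" for tau
  proof -
    have "2*A*tau = e*p*(tau/tau0)" using AU R t0 by (simp add: U_def field_simps)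
    also have "\<dots> \<le> e*p*1" using that e p t0 by (intro mult_left_mono) auto
    also have "\<dots> = 1 - (R*ka)^2" by (simp add: e_def p_def power2_eq_square algebra_simps)
    finally show ?thesis .
  qed
  have c2: "A^2 - (R*kv)^2 - 2*R*kp*(1 - R*ka) \<ge> 0"
  proof -
    have d: "A - R*kv = R*(R+1)/2*kp*hw" by (simp add: A_def)
    have "R*L < R*U" using R LU by simp
    hence s: "A + R*kv \<ge> 2*R*L" using AU by (simp add: kv_def field_simps)
    have "A^2 - (R*kv)^2 = (A - R*kv) * (A + R*kv)"
      by (simp add: power2_eq_square algebra_simps)
    also have "\<dots> = (R*(R+1)/2*kp*hw) * (A + R*kv)" by (simp only: d)
    finally have eq1: "A^2 - (R*kv)^2 = (R*(R+1)/2*kp*hw) * (A + R*kv)" .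
    have ge: "(R*(R+1)/2*kp*hw) * (A + R*kv) \<ge> (R*(R+1)/2*kp*hw) * (2*R*L)" using s R kp hw by (intro mult_left_mono) auto
    have eq2: "(R*(R+1)/2*kp*hw) * (2*R*L) = 2*R*kp*e" unfolding L_def
    proof -
      have "R*(R+1)*hw \<noteq> 0" using R hw by auto
      thus "(R*(R+1)/2*kp*hw) * (2*R*(2*e/(R*(R+1)*hw))) = 2*R*kp*e"
        by (simp add: divide_simps)
    qed
    show ?thesis using eq1 ge eq2 unfolding e_def by linarith
  qed
  have den: "den_poly r kv kp hw tau = [: complex_of_real (R*kp), complex_of_real A, 1, complex_of_real tau :]" for tau
    by (simp add: den_poly_def A_def R_def)
  have magH: "real r * cmod (H0 r ka kv kp hw tau (\<i> * complex_of_real w)) \<le> 1"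
    if "tau \<in> {0..tau0}" for tau w
  proof -
    have t: "tau \<ge> 0" using that by simp
    show ?thesis by (rule mag[OF r t c1[OF that, unfolded A_def R_def] c2[unfolded A_def R_def]])
  qed
  have Ahur: "A > tau * (R*kp)" if "tau \<in> {0..tau0}" for tau
  proof -
    have "hw*(1+R)*p < hw*(1+R)*2" using p R hw by (intro mult_strict_left_mono) auto
    moreover have "hw*(1+R)*2 = 2*(hw*(1+R))" by simp
    ultimately have "2*tau0 < hw*(1+R)" using hw1 unfolding mult.assoc by linarith
    hence "tau * (R*kp) \<le> tau0*(R*kp)" using that R kp by (intro mult_right_mono) auto
    also have "\<dots> < R*(R+1)/2*kp*hw"
    proof -
      have "tau0*(R*kp)*2 < hw*(1+R)*(R*kp)" using \<open>2*tau0 < hw*(1+R)\<close> R kp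
        by (simp add: mult_strict_right_mono)
      thus ?thesis by (simp add: algebra_simps)
    qed
    also have "\<dots> < A" using R kv by (simp add: A_def)
    finally show ?thesis .
  qed
  show ?thesis
  proof (intro exI conjI ballI allI impI)
    show "kv > 0" "kp > 0" by (rule kv, rule kp)
    fix tau assume tau: "tau \<in> {0..tau0}"
    show "hurwitz (den_poly r kv kp hw tau)" unfolding den
      by (rule hurw) (use tau A0 R kp Ahur[OF tau] in auto)
    have b: "cmod (H0 r ka kv kp hw tau (\<i> * complex_of_real w)) \<le> 1 / real r" for w
      using magH[OF tau, of w] r by (simp add: field_simps)
    show "bdd_above (range (\<lambda>\<omega>::real. cmod (H0 r ka kv kp hw tau (\<i> * complex_of_real \<omega>))))"
      using b by (intro bdd_aboveI2) auto
    have "(SUP \<omega>::real. cmod (H0 r ka kv kp hw tau (\<i> * complex_of_real \<omega>))) \<le> 1 / real r"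
      using b by (intro cSUP_least) auto
    thus "real r * (SUP \<omega>::real. cmod (H0 r ka kv kp hw tau (\<i> * complex_of_real \<omega>))) \<le> 1"
      using r by (simp add: field_simps)
  next
    fix tau w z assume tau: "tau \<in> {0..tau0}" and "charP r ka kv kp hw tau w z = 0"
    thus "cmod z \<le> 1" using roots[OF r magH[OF tau]] by (simp add: charP_def)
  qed
qed

end
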